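(* Let $(X_B,X_C,X_R)$ be an OCC of a graph $G$, let $f_X \colon X_B\to\{0,1\}$ be a proper $2$-coloring of $G[X_B]$, and let $B^\ast \subseteq X_B$ satisfy property $(\star)$ with respect to $G$, $(X_B,X_C,X_R)$ and $f_X$. Let $C_1, C_2 \subseteq X_C$ be disjoint and let $f_C \colon C_1 \to \{0,1\}$ be an arbitrary (not necessarily proper) $2$-coloring. Define $A := \{b \in X_B : b$ has a neighbor $c \in C_1$ with $f_X(b) = f_C(c)\}$, $R := \{b \in X_B : b$ has a neighbor $c \in C_1$ with $f_X(b) \neq f_C(c)\}$, and $N := N_G(C_2) \cap X_B$. If $G[X_B]$ has an $\{A,R,N\}$-separator of size at most $|X_C|$, then $B^\ast$ contains a minimum-size $\{A,R,N\}$-separator of $G[X_B]$.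
   Context: An odd cycle cut (OCC) of $G$ is a partition $(X_B, X_C, X_R)$ of $V(G)$ such that $G[X_B]$ is bipartite, there is no edge between $X_B$ and $X_R$, and $X_B \cup X_C \neq \emptyset$. A vertex set $X$ separates vertex sets $S,T$ in a graph if no connected component of the graph minus $X$ contains both a vertex of $S$ and a vertex of $T$ ($X$ may intersect $S\cup T$); a $\{T_1,\dots,T_m\}$-separator separates $T_i$ and $T_j$ for all $i\ne j$. Auxiliary graph: $G_{\mathrm{aux}}$ is obtained from a copy of $G[X_B]$ by adding, for each $v \in X_C$, two new vertices $v^{(0)}, v^{(1)}$, and for each $u \in N_G(v) \cap X_B$ the edge $v^{(f_X(u))}u$; let $T := \{v^{(i)} : v \in X_C, i \in \{0,1\}\}$, so $|T| = 2|X_C|$. Property $(\star)$ of a set $B^\ast \subseteq X_B$: for every partition $(T_1,T_2,T_3,T_X)$ of $T$ into four possibly empty parts, if there exists $S \subseteq X_B$ with $|S| \le |T|$ such that $S$ separates $T_i$ and $T_j$ in $G_{\mathrm{aux}} - T_X$ for all $1 \le i < j \le 3$, then $B^\ast$ contains such a set $S$ of minimum possible size. (Such a $B^\ast$ with $|B^\ast| = |X_C|^{\mathcal{O}(1)}$ is computable in time $2^{\mathcal{O}(|X_C|)} n^{\mathcal{O}(1)}$.) *)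

theory Defs
  imports Main
begin

definition simple_graph :: "'a set \<Rightarrow> ('a \<Rightarrow> 'a \<Rightarrow> bool) \<Rightarrow> bool" where
  "simple_graph V E \<longleftrightarrow> finite V \<and> (\<forall>u v. E u v \<longrightarrow> E v u) \<and> (\<forall>u. \<not> E u u)
     \<and> (\<forall>u v. E u v \<longrightarrow> u \<in> V \<and> v \<in> V)"

definition reach_in :: "'v set \<Rightarrow> ('v \<Rightarrow> 'v \<Rightarrow> bool) \<Rightarrow> 'v \<Rightarrow> 'v \<Rightarrow> bool" where
  "reach_in W E s t \<longleftrightarrow> s \<in> W \<and> t \<in> W \<and> (\<lambda>x y. x \<in> W \<and> y \<in> W \<and> E x y)\<^sup>*\<^sup>* s t"

text \<open>X separates S and T in the graph (W, E): no connected component of the graph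
  minus X contains a vertex of S and a vertex of T (X may intersect S and T).\<close>
definition separates :: "'v set \<Rightarrow> ('v \<Rightarrow> 'v \<Rightarrow> bool) \<Rightarrow> 'v set \<Rightarrow> 'v set \<Rightarrow> 'v set \<Rightarrow> bool" where
  "separates W E X S T \<longleftrightarrow> (\<forall>s\<in>S. \<forall>t\<in>T. \<not> reach_in (W - X) E s t)"

definition separator3 :: "'v set \<Rightarrow> ('v \<Rightarrow> 'v \<Rightarrow> bool) \<Rightarrow> 'v set \<Rightarrow> 'v set \<Rightarrow> 'v set \<Rightarrow> 'v set \<Rightarrow> bool" where
  "separator3 W E X T1 T2 T3 \<longleftrightarrow>
     separates W E X T1 T2 \<and> separates W E X T1 T3 \<and> separates W E X T2 T3"

definition proper_2col :: "'a set \<Rightarrow> ('a \<Rightarrow> 'a \<Rightarrow> bool) \<Rightarrow> ('a \<Rightarrow> nat) \<Rightarrow> bool" where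
  "proper_2col W E f \<longleftrightarrow> (\<forall>u\<in>W. f u \<in> {0,1}) \<and> (\<forall>u\<in>W. \<forall>w\<in>W. E u w \<longrightarrow> f u \<noteq> f w)"

definition bipartite_induced :: "'a set \<Rightarrow> ('a \<Rightarrow> 'a \<Rightarrow> bool) \<Rightarrow> bool" where
  "bipartite_induced W E \<longleftrightarrow> (\<exists>f. proper_2col W E f)"

definition is_OCC :: "'a set \<Rightarrow> ('a \<Rightarrow> 'a \<Rightarrow> bool) \<Rightarrow> 'a set \<Rightarrow> 'a set \<Rightarrow> 'a set \<Rightarrow> bool" where
  "is_OCC V E XB XC XR \<longleftrightarrow>
     XB \<union> XC \<union> XR = V \<and> XB \<inter> XC = {} \<and> XB \<inter> XR = {} \<and> XC \<inter> XR = {}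
     \<and> bipartite_induced XB E
     \<and> (\<forall>u\<in>XB. \<forall>w\<in>XR. \<not> E u w)
     \<and> XB \<union> XC \<noteq> {}"

text \<open>Vertices of the auxiliary graph: copies of X_B vertices, and v^(i) for v in X_C.\<close>
datatype 'a auxv = Orig 'a | Copy 'a nat

definition aux_T :: "'a set \<Rightarrow> 'a auxv set" where
  "aux_T XC = {Copy v i | v i. v \<in> XC \<and> i \<in> {0, 1}}"

definition aux_V :: "'a set \<Rightarrow> 'a set \<Rightarrow> 'a auxv set" where
  "aux_V XB XC = Orig ` XB \<union> aux_T XC"

definition aux_E :: "('a \<Rightarrow> 'a \<Rightarrow> bool) \<Rightarrow> 'a set \<Rightarrow> 'a set \<Rightarrow> ('a \<Rightarrow> nat)
    \<Rightarrow> 'a auxv \<Rightarrow> 'a auxv \<Rightarrow> bool" where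
  "aux_E E XB XC fX x y \<longleftrightarrow>
     (\<exists>u w. x = Orig u \<and> y = Orig w \<and> u \<in> XB \<and> w \<in> XB \<and> E u w)
   \<or> (\<exists>v u. x = Copy v (fX u) \<and> y = Orig u \<and> v \<in> XC \<and> u \<in> XB \<and> E v u)
   \<or> (\<exists>v u. y = Copy v (fX u) \<and> x = Orig u \<and> v \<in> XC \<and> u \<in> XB \<and> E v u)"

definition aux_sep :: "('a \<Rightarrow> 'a \<Rightarrow> bool) \<Rightarrow> 'a set \<Rightarrow> 'a set \<Rightarrow> ('a \<Rightarrow> nat)
    \<Rightarrow> 'a auxv set \<Rightarrow> 'a auxv set \<Rightarrow> 'a auxv set \<Rightarrow> 'a auxv set \<Rightarrow> 'a set \<Rightarrow> bool" where
  "aux_sep E XB XC fX T1 T2 T3 TX S \<longleftrightarrow>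
     separator3 (aux_V XB XC - TX) (aux_E E XB XC fX) (Orig ` S) T1 T2 T3"

definition property_star :: "('a \<Rightarrow> 'a \<Rightarrow> bool) \<Rightarrow> 'a set \<Rightarrow> 'a set \<Rightarrow> ('a \<Rightarrow> nat)
    \<Rightarrow> 'a set \<Rightarrow> bool" where
  "property_star E XB XC fX Bstar \<longleftrightarrow>
    (\<forall>T1 T2 T3 TX.
       T1 \<union> T2 \<union> T3 \<union> TX = aux_T XC \<and>
       T1 \<inter> T2 = {} \<and> T1 \<inter> T3 = {} \<and> T1 \<inter> TX = {} \<and>
       T2 \<inter> T3 = {} \<and> T2 \<inter> TX = {} \<and> T3 \<inter> TX = {} \<longrightarrow>
       (\<exists>S. S \<subseteq> XB \<and> card S \<le> card (aux_T XC) \<and> aux_sep E XB XC fX T1 T2 T3 TX S) \<longrightarrow>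
       (\<exists>S. S \<subseteq> Bstar \<and> aux_sep E XB XC fX T1 T2 T3 TX S \<and>
            (\<forall>S'. S' \<subseteq> XB \<and> aux_sep E XB XC fX T1 T2 T3 TX S' \<longrightarrow> card S \<le> card S')))"

end

theory Submission imports Defs begin

lemma reach_sym:
  assumes "\<And>u w. E u w \<Longrightarrow> E w u" "reach_in U E a b"
  shows "reach_in U E b a"
proof -
  have "(\<lambda>x y. x \<in> U \<and> y \<in> U \<and> E x y)\<^sup>*\<^sup>* a b" using assms(2) unfolding reach_in_def by simp
  then have "(\<lambda>x y. x \<in> U \<and> y \<in> U \<and> E x y)\<^sup>*\<^sup>* b a"
  proof (induction rule: rtranclp_induct)
    case base then show ?case by simp
  next
    case (step y z)
    then show ?case using assms(1) converse_rtranclp_into_rtranclp[of "\<lambda>x y. x \<in> U \<and> y \<in> U \<and> E x y" z y a] by blast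
  qed
  then show ?thesis using assms(2) unfolding reach_in_def by simp
qed

lemma sep_sym:
  assumes "\<And>u w. E u w \<Longrightarrow> E w u" "separates W E X S T"
  shows "separates W E X T S"
  using assms reach_sym unfolding separates_def by metis

lemma reach_inv:
  fixes Ea :: "'b \<Rightarrow> 'b \<Rightarrow> bool" and g :: "'a \<Rightarrow> 'b"
  assumes edges: "\<And>x y. x\<in>W' \<Longrightarrow> y\<in>W' \<Longrightarrow> Ea x y \<Longrightarrow>
       (\<exists>u w. x = g u \<and> y = g w \<and> u \<in> U \<and> w \<in> U \<and> E u w) \<or>
       (\<exists>u. x = g u \<and> u \<in> U \<and> ((y\<in>Ti \<and> u\<in>Ai) \<or> (y\<in>Tj \<and> u \<in> Aj) \<or> (y\<in>Tk \<and> u\<in>Ak))) \<or>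
       (\<exists>u. y = g u \<and> u \<in> U \<and> ((x\<in>Ti \<and> u\<in>Ai) \<or> (x\<in>Tj \<and> u \<in> Aj) \<or> (x\<in>Tk \<and> u\<in>Ak)))"
  and symE: "\<And>u w. E u w \<Longrightarrow> E w u"
  and inj: "inj g" and dg: "Ti \<inter> range g = {}" and dgj: "Tj \<inter> range g = {}" and dgk: "Tk \<inter> range g = {}"
  and d: "Ti \<inter> Tj = {}" "Ti \<inter> Tk = {}"
  and sj: "\<forall>a\<in>Ai. \<forall>b\<in>Aj. \<not> reach_in U E a b"
  and sk: "\<forall>a\<in>Ai. \<forall>b\<in>Ak. \<not> reach_in U E a b"
  and r: "reach_in W' Ea x y" and x: "x \<in> Ti"
  shows "y \<notin> Tj \<and> y \<notin> Tk"
proof -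
  define P where "P z = (z \<in> Ti \<or> (\<exists>u a. z = g u \<and> a \<in> Ai \<and> reach_in U E a u))" for z
  have trans: "reach_in U E a u \<Longrightarrow> u \<in> U \<Longrightarrow> w \<in> U \<Longrightarrow> E u w \<Longrightarrow> reach_in U E a w" for a u w
    unfolding reach_in_def using rtranclp.rtrancl_into_rtrancl[of "\<lambda>x y. x \<in> U \<and> y \<in> U \<and> E x y" a u w] by blast
  have stepP: "P y \<longleftrightarrow> P z" if yz: "y \<in> W'" "z \<in> W'" "Ea y z" for y z
  proof -
    consider (oo) u w where "y = g u" "z = g w" "u \<in> U" "w \<in> U" "E u w"
      | (og) u where "y = g u" "u \<in> U" "(z\<in>Ti \<and> u\<in>Ai) \<or> (z\<in>Tj \<and> u \<in> Aj) \<or> (z\<in>Tk \<and> u\<in>Ak)"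
      | (go) u where "z = g u" "u \<in> U" "(y\<in>Ti \<and> u\<in>Ai) \<or> (y\<in>Tj \<and> u \<in> Aj) \<or> (y\<in>Tk \<and> u\<in>Ak)"
      using edges[OF yz] by blast
    then show ?thesis
    proof cases
      case (oo u w)
      note h = oo
      have "g u \<notin> Ti" "g w \<notin> Ti" using dg by auto
      moreover have "(\<exists>a. a \<in> Ai \<and> reach_in U E a u) \<longleftrightarrow> (\<exists>a. a \<in> Ai \<and> reach_in U E a w)"
        using trans h symE by blast
      ultimately show ?thesis unfolding P_def using h inj by (auto dest: injD)
    next
      case (og u)
      note h = og(1,2) and hh = og(3)
      have gu: "g u \<notin> Ti" using dg by auto
      have rr: "reach_in U E u u" using h unfolding reach_in_def by simp
      show ?thesis using hh
      proof (elim disjE conjE)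
        assume "z \<in> Ti" "u \<in> Ai" then show ?thesis unfolding P_def using h rr by blast
      next
        assume "z \<in> Tj" "u \<in> Aj" then show ?thesis unfolding P_def using h gu d sj inj dgj dgk by (auto dest: injD)
      next
        assume "z \<in> Tk" "u \<in> Ak" then show ?thesis unfolding P_def using h gu d sk inj dgj dgk by (auto dest: injD)
      qed
    next
      case (go u)
      note h = go(1,2) and hh = go(3)
      have gu: "g u \<notin> Ti" using dg by auto
      have rr: "reach_in U E u u" using h unfolding reach_in_def by simp
      show ?thesis using hh
      proof (elim disjE conjE)
        assume "y \<in> Ti" "u \<in> Ai" then show ?thesis unfolding P_def using h rr by blast
      next
        assume "y \<in> Tj" "u \<in> Aj" then show ?thesis unfolding P_def using h gu d sj inj dgj dgk by (auto dest: injD)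
      next
        assume "y \<in> Tk" "u \<in> Ak" then show ?thesis unfolding P_def using h gu d sk inj dgj dgk by (auto dest: injD)
      qed
    qed
  qed
  have rt: "(\<lambda>x y. x \<in> W' \<and> y \<in> W' \<and> Ea x y)\<^sup>*\<^sup>* x y" using r unfolding reach_in_def by simp
  have "P y" using rt
  proof (induction rule: rtranclp_induct)
    case base then show ?case using x unfolding P_def by simp
  next
    case (step y z) then show ?case using stepP by blast
  qed
  then show ?thesis unfolding P_def using d dgj dgk by blast
qed

lemma lift:
  assumes r: "reach_in U E a b"
    and e: "\<And>u w. u\<in>U \<Longrightarrow> w\<in>U \<Longrightarrow> E u w \<Longrightarrow> Ea (g u) (g w)"
    and gU: "g ` U \<subseteq> W'" and t: "t \<in> W'" "t' \<in> W'"
    and et: "Ea t (g a)" "Ea (g b) t'"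
  shows "reach_in W' Ea t t'"
proof -
  let ?R = "\<lambda>x y. x \<in> W' \<and> y \<in> W' \<and> Ea x y"
  have rt: "(\<lambda>x y. x \<in> U \<and> y \<in> U \<and> E x y)\<^sup>*\<^sup>* a b" and ab: "a \<in> U" "b \<in> U"
    using r unfolding reach_in_def by auto
  have "?R\<^sup>*\<^sup>* (g a) (g b)" using rt
  proof (induction rule: rtranclp_induct)
    case base then show ?case by simp
  next
    case (step y z)
    then have "?R (g y) (g z)" using e gU by auto
    with step(3) show ?case by (rule rtranclp.rtrancl_into_rtrancl)
  qed
  moreover have "?R t (g a)" "?R (g b) t'" using t et gU ab by auto
  ultimately have "?R\<^sup>*\<^sup>* t t'"
    using converse_rtranclp_into_rtranclp[of ?R t "g a" "g b"] rtranclp.rtrancl_into_rtrancl[of ?R t "g b" t'] by blast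
  then show ?thesis unfolding reach_in_def using t by simp
qed

lemma main_gen:
  fixes V :: "'a set" and E :: "'a \<Rightarrow> 'a \<Rightarrow> bool"
    and XB XC XR Bstar C1 C2 :: "'a set"
    and fX fC :: "'a \<Rightarrow> nat"
  assumes G: "simple_graph V E"
    and occ: "is_OCC V E XB XC XR"
    and fX: "proper_2col XB E fX"
    and Bsub: "Bstar \<subseteq> XB"
    and star: "property_star E XB XC fX Bstar"
    and C1: "C1 \<subseteq> XC" and C2: "C2 \<subseteq> XC" and disj: "C1 \<inter> C2 = {}"
    and fC: "\<forall>c\<in>C1. fC c \<in> {0, 1}"
    and Adef: "A = {b \<in> XB. \<exists>c\<in>C1. E b c \<and> fX b = fC c}"
    and Rdef: "R = {b \<in> XB. \<exists>c\<in>C1. E b c \<and> fX b \<noteq> fC c}"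
    and Ndef: "N = {b \<in> XB. \<exists>c\<in>C2. E b c}"
    and hyp: "\<exists>S. S \<subseteq> XB \<and> card S \<le> card XC \<and> separator3 XB E S A R N"
  shows "\<exists>S. S \<subseteq> Bstar \<and> separator3 XB E S A R N \<and>
       (\<forall>S'. S' \<subseteq> XB \<and> separator3 XB E S' A R N \<longrightarrow> card S \<le> card S')"
proof -
  have symE: "\<And>u w. E u w \<Longrightarrow> E w u" using G unfolding simple_graph_def by blast
  have finV: "finite V" using G unfolding simple_graph_def by blast
  have "XC \<subseteq> V" using occ unfolding is_OCC_def by blast
  then have finXC: "finite XC" using finV finite_subset by blast
  define T1 where "T1 = {Copy c (fC c) | c. c \<in> C1}"
  define T2 where "T2 = {Copy c (1 - fC c) | c. c \<in> C1}"
  define T3 where "T3 = {Copy c i | c i. c \<in> C2 \<and> i \<in> {0::nat, 1}}"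
  define TX where "TX = aux_T XC - (T1 \<union> T2 \<union> T3)"
  define Ea where "Ea = aux_E E XB XC fX"
  have Tsub: "T1 \<union> T2 \<union> T3 \<subseteq> aux_T XC"
  proof -
    have "T1 \<subseteq> aux_T XC"
    proof
      fix z assume "z \<in> T1"
      then obtain c where "c \<in> C1" "z = Copy c (fC c)" unfolding T1_def by blast
      then show "z \<in> aux_T XC" unfolding aux_T_def using C1 fC by blast
    qed
    moreover have "T2 \<subseteq> aux_T XC"
    proof
      fix z assume "z \<in> T2"
      then obtain c where c: "c \<in> C1" "z = Copy c (1 - fC c)" unfolding T2_def by blast
      then have "1 - fC c \<in> {0,1}" using fC by auto
      then show "z \<in> aux_T XC" unfolding aux_T_def using C1 c by blast
    qed
    moreover have "T3 \<subseteq> aux_T XC" unfolding T3_def aux_T_def using C2 by blast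
    ultimately show ?thesis by blast
  qed
  have part: "T1 \<union> T2 \<union> T3 \<union> TX = aux_T XC \<and>
       T1 \<inter> T2 = {} \<and> T1 \<inter> T3 = {} \<and> T1 \<inter> TX = {} \<and>
       T2 \<inter> T3 = {} \<and> T2 \<inter> TX = {} \<and> T3 \<inter> TX = {}"
  proof -
    have d12: "T1 \<inter> T2 = {}"
    proof (rule ccontr)
      assume "T1 \<inter> T2 \<noteq> {}"
      then obtain c c' where "c \<in> C1" "c' \<in> C1" "Copy c (fC c) = Copy c' (1 - fC c')"
        unfolding T1_def T2_def by blast
      then have "c = c'" "fC c = 1 - fC c" by auto
      then show False using fC \<open>c \<in> C1\<close> by auto
    qed
    have d13: "T1 \<inter> T3 = {}" unfolding T1_def T3_def using disj by blast
    have d23: "T2 \<inter> T3 = {}" unfolding T2_def T3_def using disj by blast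
    show ?thesis using d12 d13 d23 Tsub unfolding TX_def by blast
  qed
  have rg: "T1 \<inter> range Orig = {}" "T2 \<inter> range Orig = {}" "T3 \<inter> range Orig = {}"
    unfolding T1_def T2_def T3_def by auto
  have injO: "inj Orig" by (simp add: inj_def)
  have Wmem: "z \<in> aux_V XB XC - TX - Orig ` S \<longleftrightarrow> (\<exists>u. z = Orig u \<and> u \<in> XB - S) \<or> z \<in> T1 \<or> z \<in> T2 \<or> z \<in> T3"
    for z S
  proof -
    have aT: "aux_T XC \<inter> range Orig = {}" unfolding aux_T_def by auto
    have TXs: "TX \<subseteq> aux_T XC" unfolding TX_def by blast
    show ?thesis
    proof
      assume z: "z \<in> aux_V XB XC - TX - Orig ` S"
      show "(\<exists>u. z = Orig u \<and> u \<in> XB - S) \<or> z \<in> T1 \<or> z \<in> T2 \<or> z \<in> T3"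
      proof (cases "z \<in> Orig ` XB")
        case True then show ?thesis using z by auto
      next
        case False then have "z \<in> aux_T XC - TX" using z unfolding aux_V_def by blast
        then show ?thesis unfolding TX_def by blast
      qed
    next
      assume z: "(\<exists>u. z = Orig u \<and> u \<in> XB - S) \<or> z \<in> T1 \<or> z \<in> T2 \<or> z \<in> T3"
      show "z \<in> aux_V XB XC - TX - Orig ` S"
      proof (cases "z \<in> range Orig")
        case True
        then have "\<exists>u. z = Orig u \<and> u \<in> XB - S" using z rg by blast
        then show ?thesis using aT TXs unfolding aux_V_def by (auto simp: inj_image_mem_iff[OF injO])
      next
        case False
        then have "z \<in> T1 \<union> T2 \<union> T3" using z by blast
        then show ?thesis using Tsub False unfolding aux_V_def TX_def by blast
      qed
    qed
  qed
  have edge: "(\<exists>u w. x = Orig u \<and> y = Orig w \<and> u \<in> XB - S \<and> w \<in> XB - S \<and> E u w) \<or>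
       (\<exists>u. x = Orig u \<and> u \<in> XB - S \<and> ((y\<in>T1 \<and> u\<in>A) \<or> (y\<in>T2 \<and> u \<in> R) \<or> (y\<in>T3 \<and> u\<in>N))) \<or>
       (\<exists>u. y = Orig u \<and> u \<in> XB - S \<and> ((x\<in>T1 \<and> u\<in>A) \<or> (x\<in>T2 \<and> u \<in> R) \<or> (x\<in>T3 \<and> u\<in>N)))"
    if xy: "x \<in> aux_V XB XC - TX - Orig ` S" "y \<in> aux_V XB XC - TX - Orig ` S" "Ea x y" for x y S
  proof -
    have lab: "(x'\<in>T1 \<and> u\<in>A) \<or> (x'\<in>T2 \<and> u \<in> R) \<or> (x'\<in>T3 \<and> u\<in>N)"
      if h: "x' = Copy v (fX u)" "v \<in> XC" "u \<in> XB" "E v u" "x' \<in> T1 \<or> x' \<in> T2 \<or> x' \<in> T3" for x' v u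
    proof -
      have Euv: "E u v" using symE h by blast
      show ?thesis using h(5)
      proof (elim disjE)
        assume "x' \<in> T1" then show ?thesis using h Euv unfolding T1_def Adef by auto
      next
        assume "x' \<in> T2"
        then obtain c where c: "c \<in> C1" "x' = Copy c (1 - fC c)" unfolding T2_def by auto
        have "fC c \<in> {0,1}" using fC c by auto
        then have "fX u \<noteq> fC c" using c h by auto
        then show ?thesis using c h Euv \<open>x' \<in> T2\<close> unfolding Rdef by auto
      next
        assume "x' \<in> T3" then show ?thesis using h Euv unfolding T3_def Ndef by auto
      qed
    qed
    from xy(3)[unfolded Ea_def aux_E_def] show ?thesis
    proof (elim disjE exE conjE)
      fix u w assume "x = Orig u" "y = Orig w" "u \<in> XB" "w \<in> XB" "E u w"
      then show ?thesis using xy(1,2) Wmem by blast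
    next
      fix v u assume h: "x = Copy v (fX u)" "y = Orig u" "v \<in> XC" "u \<in> XB" "E v u"
      have "x \<in> T1 \<or> x \<in> T2 \<or> x \<in> T3" using xy(1) Wmem h(1) by blast
      moreover have "u \<notin> S" using xy(2) h(2) by auto
      ultimately show ?thesis using lab[OF h(1,3,4,5)] h by blast
    next
      fix v u assume h: "y = Copy v (fX u)" "x = Orig u" "v \<in> XC" "u \<in> XB" "E v u"
      have "y \<in> T1 \<or> y \<in> T2 \<or> y \<in> T3" using xy(2) Wmem h(1) by blast
      moreover have "u \<notin> S" using xy(1) h(2) by auto
      ultimately show ?thesis using lab[OF h(1,3,4,5)] h by blast
    qed
  qed
  define W where "W S = aux_V XB XC - TX - Orig ` S" for S
  have attA: "\<exists>t\<in>T1. Ea t (Orig a) \<and> Ea (Orig a) t" if aX: "a \<in> A" for a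
  proof -
    obtain c where c: "c \<in> C1" "E a c" "fX a = fC c" "a \<in> XB" using aX Adef by blast
    have "Copy c (fC c) \<in> T1" unfolding T1_def using c by blast
    moreover have "E c a" using symE c by blast
    ultimately show ?thesis unfolding Ea_def aux_E_def using c C1 by (metis subsetD)
  qed
  have attR: "\<exists>t\<in>T2. Ea t (Orig a) \<and> Ea (Orig a) t" if aX: "a \<in> R" for a
  proof -
    obtain c where c: "c \<in> C1" "E a c" "fX a \<noteq> fC c" "a \<in> XB" using aX Rdef by blast
    have "fX a \<in> {0,1}" using fX c unfolding proper_2col_def by blast
    moreover have "fC c \<in> {0,1}" using fC c by blast
    ultimately have "fX a = 1 - fC c" using c by auto
    then have "Copy c (fX a) \<in> T2" unfolding T2_def using c by blast
    moreover have "E c a" using symE c by blast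
    ultimately show ?thesis unfolding Ea_def aux_E_def using c C1 by (metis subsetD)
  qed
  have attN: "\<exists>t\<in>T3. Ea t (Orig a) \<and> Ea (Orig a) t" if aX: "a \<in> N" for a
  proof -
    obtain c where c: "c \<in> C2" "E a c" "a \<in> XB" using aX Ndef by blast
    have "fX a \<in> {0,1}" using fX c unfolding proper_2col_def by blast
    then have "Copy c (fX a) \<in> T3" unfolding T3_def using c by blast
    moreover have "E c a" using symE c by blast
    ultimately show ?thesis unfolding Ea_def aux_E_def using c C2 by (metis subsetD)
  qed
  have TW: "T1 \<subseteq> W S" "T2 \<subseteq> W S" "T3 \<subseteq> W S" "Orig ` (XB - S) \<subseteq> W S" for S
    unfolding W_def using Wmem by blast+
  have eO: "Ea (Orig u) (Orig w)" if "u \<in> XB - S" "w \<in> XB - S" "E u w" for u w S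
    unfolding Ea_def aux_E_def using that by blast
  have toG: "separates XB E S P Q"
    if sp: "separates (aux_V XB XC - TX) Ea (Orig ` S) TP TQ"
      and aP: "\<forall>a\<in>P. \<exists>t\<in>TP. Ea t (Orig a) \<and> Ea (Orig a) t"
      and aQ: "\<forall>a\<in>Q. \<exists>t\<in>TQ. Ea t (Orig a) \<and> Ea (Orig a) t"
      and TPW: "TP \<subseteq> W S" and TQW: "TQ \<subseteq> W S" for S P Q TP TQ
    unfolding separates_def
  proof (intro ballI notI)
    fix a b assume a: "a \<in> P" and b: "b \<in> Q" and r: "reach_in (XB - S) E a b"
    obtain t where t: "t \<in> TP" "Ea t (Orig a)" using aP a by blast
    obtain t' where t': "t' \<in> TQ" "Ea (Orig b) t'" using aQ b by blast
    have "reach_in (W S) Ea t t'"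
      by (rule lift[OF r, where g=Orig]) (use eO TW(4) t t' TPW TQW in auto)
    then show False using sp t t' unfolding separates_def W_def by blast
  qed
  have aux_to: "separator3 XB E S A R N" if h: "aux_sep E XB XC fX T1 T2 T3 TX S" for S
  proof -
    have s: "separates (aux_V XB XC - TX) Ea (Orig ` S) T1 T2"
      "separates (aux_V XB XC - TX) Ea (Orig ` S) T1 T3"
      "separates (aux_V XB XC - TX) Ea (Orig ` S) T2 T3"
      using h unfolding aux_sep_def separator3_def Ea_def by blast+
    show ?thesis unfolding separator3_def
    proof (intro conjI)
      show "separates XB E S A R" by (rule toG[OF s(1) _ _ TW(1) TW(2)]) (use attA attR in blast)+
      show "separates XB E S A N" by (rule toG[OF s(2) _ _ TW(1) TW(3)]) (use attA attN in blast)+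
      show "separates XB E S R N" by (rule toG[OF s(3) _ _ TW(2) TW(3)]) (use attR attN in blast)+
    qed
  qed
  have edgeW: "\<And>x y. x\<in>W S \<Longrightarrow> y\<in>W S \<Longrightarrow> Ea x y \<Longrightarrow>
       (\<exists>u w. x = Orig u \<and> y = Orig w \<and> u \<in> XB - S \<and> w \<in> XB - S \<and> E u w) \<or>
       (\<exists>u. x = Orig u \<and> u \<in> XB - S \<and> ((y\<in>T1 \<and> u\<in>A) \<or> (y\<in>T2 \<and> u \<in> R) \<or> (y\<in>T3 \<and> u\<in>N))) \<or>
       (\<exists>u. y = Orig u \<and> u \<in> XB - S \<and> ((x\<in>T1 \<and> u\<in>A) \<or> (x\<in>T2 \<and> u \<in> R) \<or> (x\<in>T3 \<and> u\<in>N)))" for S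
    unfolding W_def using edge by blast
  have to_aux: "separator3 XB E S A R N \<Longrightarrow> aux_sep E XB XC fX T1 T2 T3 TX S" for S
  proof -
    assume sep: "separator3 XB E S A R N"
    have s12: "\<forall>a\<in>A. \<forall>b\<in>R. \<not> reach_in (XB - S) E a b"
      and s13: "\<forall>a\<in>A. \<forall>b\<in>N. \<not> reach_in (XB - S) E a b"
      and s23: "\<forall>a\<in>R. \<forall>b\<in>N. \<not> reach_in (XB - S) E a b"
      using sep unfolding separator3_def separates_def by blast+
    have s21: "\<forall>a\<in>R. \<forall>b\<in>A. \<not> reach_in (XB - S) E a b"
      using s12 reach_sym[of E, OF symE] by blast
    have d: "T1 \<inter> T2 = {}" "T1 \<inter> T3 = {}" "T2 \<inter> T3 = {}" using part by blast+
    have ei12: "(\<exists>u w. x = Orig u \<and> y = Orig w \<and> u \<in> XB - S \<and> w \<in> XB - S \<and> E u w) \<or>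
       (\<exists>u. x = Orig u \<and> u \<in> XB - S \<and> ((y\<in>T1 \<and> u\<in>A) \<or> (y\<in>T2 \<and> u \<in> R) \<or> (y\<in>T3 \<and> u\<in>N))) \<or>
       (\<exists>u. y = Orig u \<and> u \<in> XB - S \<and> ((x\<in>T1 \<and> u\<in>A) \<or> (x\<in>T2 \<and> u \<in> R) \<or> (x\<in>T3 \<and> u\<in>N)))"
      if "x\<in>W S" "y\<in>W S" "Ea x y" for x y
      using edgeW[OF that] by blast
    have i12: "y \<notin> T2" if "reach_in (W S) Ea x y" "x \<in> T1" for x y
      using reach_inv[where W'="W S" and Ea=Ea and g=Orig and U="XB - S" and E=E
        and Ti=T1 and Tj=T2 and Tk=T3 and Ai=A and Aj=R and Ak=N, OF ei12 symE injO rg(1) rg(2) rg(3) d(1) d(2) s12 s13 that] by blast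
    have ei13: "(\<exists>u w. x = Orig u \<and> y = Orig w \<and> u \<in> XB - S \<and> w \<in> XB - S \<and> E u w) \<or>
       (\<exists>u. x = Orig u \<and> u \<in> XB - S \<and> ((y\<in>T1 \<and> u\<in>A) \<or> (y\<in>T3 \<and> u \<in> N) \<or> (y\<in>T2 \<and> u\<in>R))) \<or>
       (\<exists>u. y = Orig u \<and> u \<in> XB - S \<and> ((x\<in>T1 \<and> u\<in>A) \<or> (x\<in>T3 \<and> u \<in> N) \<or> (x\<in>T2 \<and> u\<in>R)))"
      if "x\<in>W S" "y\<in>W S" "Ea x y" for x y
      using edgeW[OF that] by blast
    have i13: "y \<notin> T3" if "reach_in (W S) Ea x y" "x \<in> T1" for x y
      using reach_inv[where W'="W S" and Ea=Ea and g=Orig and U="XB - S" and E=E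
        and Ti=T1 and Tj=T3 and Tk=T2 and Ai=A and Aj=N and Ak=R, OF ei13 symE injO rg(1) rg(3) rg(2) d(2) d(1) s13 s12 that] by blast
    have d2: "T2 \<inter> T3 = {}" "T2 \<inter> T1 = {}" using d by blast+
    have ei23: "(\<exists>u w. x = Orig u \<and> y = Orig w \<and> u \<in> XB - S \<and> w \<in> XB - S \<and> E u w) \<or>
       (\<exists>u. x = Orig u \<and> u \<in> XB - S \<and> ((y\<in>T2 \<and> u\<in>R) \<or> (y\<in>T3 \<and> u \<in> N) \<or> (y\<in>T1 \<and> u\<in>A))) \<or>
       (\<exists>u. y = Orig u \<and> u \<in> XB - S \<and> ((x\<in>T2 \<and> u\<in>R) \<or> (x\<in>T3 \<and> u \<in> N) \<or> (x\<in>T1 \<and> u\<in>A)))"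
      if "x\<in>W S" "y\<in>W S" "Ea x y" for x y
      using edgeW[OF that] by blast
    have i23: "y \<notin> T3" if "reach_in (W S) Ea x y" "x \<in> T2" for x y
      using reach_inv[where W'="W S" and Ea=Ea and g=Orig and U="XB - S" and E=E
        and Ti=T2 and Tj=T3 and Tk=T1 and Ai=R and Aj=N and Ak=A, OF ei23 symE injO rg(2) rg(3) rg(1) d2(1) d2(2) s23 s21 that] by blast
    show ?thesis unfolding aux_sep_def separator3_def separates_def Ea_def[symmetric]
      using i12 i13 i23 unfolding W_def by blast
  qed
  obtain S0 where S0: "S0 \<subseteq> XB" "card S0 \<le> card XC" "separator3 XB E S0 A R N" using hyp by blast
  have finT: "finite (aux_T XC)"
  proof -
    have "aux_T XC \<subseteq> (\<lambda>(v,i). Copy v i) ` (XC \<times> {0,1})" unfolding aux_T_def by auto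
    then show ?thesis using finXC finite_subset by blast
  qed
  have injC: "inj_on (\<lambda>v. Copy v (0::nat)) XC" by (rule inj_onI) simp
  have c1: "card ((\<lambda>v. Copy v (0::nat)) ` XC) = card XC" using card_image[OF injC] .
  have sub: "(\<lambda>v. Copy v (0::nat)) ` XC \<subseteq> aux_T XC" unfolding aux_T_def by blast
  have "card ((\<lambda>v. Copy v (0::nat)) ` XC) \<le> card (aux_T XC)"
    using card_mono[OF finT sub] .
  then have cXC: "card XC \<le> card (aux_T XC)" using c1 by simp
  have ex: "\<exists>S. S \<subseteq> XB \<and> card S \<le> card (aux_T XC) \<and> aux_sep E XB XC fX T1 T2 T3 TX S"
  proof (intro exI conjI)
    show "S0 \<subseteq> XB" by (rule S0(1))
    show "card S0 \<le> card (aux_T XC)" using S0(2) cXC by linarith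
    show "aux_sep E XB XC fX T1 T2 T3 TX S0" by (rule to_aux[OF S0(3)])
  qed
  obtain S where S: "S \<subseteq> Bstar" "aux_sep E XB XC fX T1 T2 T3 TX S"
    "\<forall>S'. S' \<subseteq> XB \<and> aux_sep E XB XC fX T1 T2 T3 TX S' \<longrightarrow> card S \<le> card S'"
    using star[unfolded property_star_def, rule_format, OF part ex] by blast
  show ?thesis
  proof (intro exI conjI allI impI)
    show "S \<subseteq> Bstar" by (rule S(1))
    show "separator3 XB E S A R N" by (rule aux_to[OF S(2)])
    fix S' assume "S' \<subseteq> XB \<and> separator3 XB E S' A R N"
    then show "card S \<le> card S'" using S(3) to_aux by blast
  qed
qed

theorem mainTheorem15:
  fixes V :: "'a set" and E :: "'a \<Rightarrow> 'a \<Rightarrow> bool"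
    and XB XC XR Bstar C1 C2 :: "'a set"
    and fX fC :: "'a \<Rightarrow> nat"
  assumes G: "simple_graph V E"
    and occ: "is_OCC V E XB XC XR"
    and fX: "proper_2col XB E fX"
    and Bsub: "Bstar \<subseteq> XB"
    and star: "property_star E XB XC fX Bstar"
    and C1: "C1 \<subseteq> XC" and C2: "C2 \<subseteq> XC" and disj: "C1 \<inter> C2 = {}"
    and fC: "\<forall>c\<in>C1. fC c \<in> {0, 1}"
    and hyp: "\<exists>S. S \<subseteq> XB \<and> card S \<le> card XC \<and>
       separator3 XB E S
         {b \<in> XB. \<exists>c\<in>C1. E b c \<and> fX b = fC c}
         {b \<in> XB. \<exists>c\<in>C1. E b c \<and> fX b \<noteq> fC c}
         {b \<in> XB. \<exists>c\<in>C2. E b c}"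
  shows "\<exists>S. S \<subseteq> Bstar \<and>
       separator3 XB E S
         {b \<in> XB. \<exists>c\<in>C1. E b c \<and> fX b = fC c}
         {b \<in> XB. \<exists>c\<in>C1. E b c \<and> fX b \<noteq> fC c}
         {b \<in> XB. \<exists>c\<in>C2. E b c} \<and>
       (\<forall>S'. S' \<subseteq> XB \<and>
          separator3 XB E S'
            {b \<in> XB. \<exists>c\<in>C1. E b c \<and> fX b = fC c}
            {b \<in> XB. \<exists>c\<in>C1. E b c \<and> fX b \<noteq> fC c}
            {b \<in> XB. \<exists>c\<in>C2. E b c}
          \<longrightarrow> card S \<le> card S')"
  by (rule main_gen[OF G occ fX Bsub star C1 C2 disj fC refl refl refl hyp])

end
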